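(* Let $f:E\to\mathbb{R}$ be $L$-smooth and $1$-weakly-quasi-convex with respect to a minimizer $x_*$ (in particular, this holds if $f$ is convex and $L$-smooth with minimizer $x_*$). Let Algorithm AGMsDR (either option) be run from $x^0$ for $N\ge1$ steps. Then $$\min_{k=\lceil N/2\rceil,\dots,N}\|\nabla f(y^k)\|_*^2\le\frac{64L^2V(x_*,x^0)}{N^3},\qquad f(x^N)-f(x_* )\le\frac{4LV(x_*,x^0)}{N^2}.$$
   Context: $E$ is a finite-dimensional real vector space with a norm $\|\cdot\|$; $E^*$ is its dual, $\langle g,x\rangle$ denotes the value of $g\in E^*$ at $x\in E$, and $\|g\|_*=\max\{\langle g,x\rangle:\|x\|\le 1\}$. For $g\in E^*$, $g^{\#}$ denotes a (fixed) element $s\in E$ with $\|s\|\le 1$ and $\langle g,s\rangle=\|g\|_*$. A prox-function $d:E\to\mathbb{R}$ is continuously differentiable, convex, $1$-strongly convex with respect to $\|\cdot\|$ (i.e. $d(y)-d(x)-\langle\nabla d(x),y-x\rangle\ge\frac12\|y-x\|^2$ for all $x,y\in E$) and satisfies $\min_E d=0$; its Bregman divergence is $V(x,z)=d(x)-d(z)-\langle\nabla d(z),x-z\rangle$. A function $f:E\to\mathbb{R}$ is $L$-smooth ($L>0$) if it is continuously differentiable and $\|\nabla f(x)-\nabla f(y)\|_*\le L\|x-y\|$ for all $x,y\in E$. A differentiable $f$ with a minimizer $x_*$ is $\gamma$-weakly-quasi-convex ($\gamma\in(0,1]$) if $\gamma(f(x)-f(x_* ))\le\langle\nabla f(x),x-x_*\rangle$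 for all $x\in E$. Algorithm AGMsDR (input $x^0\in E$, and $L$ for Option (a)): set $A_0=0$, $v^0=x^0$, $\psi_0(x)=V(x,x^0)$. For $k=0,1,2,\dots$: 1. Choose $\beta_k\in\arg\min_{\beta\in[0,1]} f(v^k+\beta(x^k-v^k))$ (a global minimizer over the interval) and set $y^k=v^k+\beta_k(x^k-v^k)$. 2. Option (a): $x^{k+1}\in\arg\min_{x\in E}\{f(y^k)+\langle\nabla f(y^k),x-y^k\rangle+\frac L2\|x-y^k\|^2\}$, and $a_{k+1}>0$ solves $\frac{a_{k+1}^2}{A_k+a_{k+1}}=\frac1L$. Option (b): $h_{k+1}\in\arg\min_{h\ge0} f(y^k-h(\nabla f(y^k))^{\#})$, $x^{k+1}=y^k-h_{k+1}(\nabla f(y^k))^{\#}$, and $a_{k+1}$ is the largest solution of $f(y^k)-\frac{a_{k+1}^2}{2(A_k+a_{k+1})}\|\nabla f(y^k)\|_*^2=f(x^{k+1})$. 3. $A_{k+1}=A_k+a_{k+1}$; $\psi_{k+1}(x)=\psi_k(x)+a_{k+1}\{f(y^k)+\langle\nabla f(y^k),x-y^k\rangle\}$; $v^{k+1}=\arg\min_{x\in E}\psi_{k+1}(x)$. It is assumed that all the minima in the algorithm are attained, and that $\nabla f(y^k)\neq 0$ for all iterations considered (otherwise $y^k$ is a stationary point and the method stops). *)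

theory Defs
  imports "HOL-Analysis.Analysis"
begin

text \<open>The finite-dimensional space E is modelled by a type 'a :: euclidean_space.
  The norm of the paper is an arbitrary norm nrm on it (not necessarily the Euclidean one).
  The dual space E* is identified with 'a via the inner product: a functional g acts
  by x \<mapsto> g \<bullet> x.\<close>

definition is_norm :: "('a::real_vector \<Rightarrow> real) \<Rightarrow> bool" where
  "is_norm nrm \<longleftrightarrow>
     (\<forall>x. nrm x = 0 \<longleftrightarrow> x = 0) \<and>
     (\<forall>x y. nrm (x + y) \<le> nrm x + nrm y) \<and>
     (\<forall>c x. nrm (c *\<^sub>R x) = \<bar>c\<bar> * nrm x)"

definition dual_norm :: "('a::real_inner \<Rightarrow> real) \<Rightarrow> 'a \<Rightarrow> real" where
  "dual_norm nrm g = Sup ((\<lambda>x. g \<bullet> x) ` {x. nrm x \<le> 1})"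

definition is_sharp :: "('a::real_inner \<Rightarrow> real) \<Rightarrow> ('a \<Rightarrow> 'a) \<Rightarrow> bool" where
  "is_sharp nrm sharp \<longleftrightarrow> (\<forall>g. nrm (sharp g) \<le> 1 \<and> g \<bullet> sharp g = dual_norm nrm g)"

definition is_gradient :: "('a::real_inner \<Rightarrow> real) \<Rightarrow> ('a \<Rightarrow> 'a) \<Rightarrow> bool" where
  "is_gradient f gradf \<longleftrightarrow> (\<forall>x. (f has_derivative (\<lambda>h. gradf x \<bullet> h)) (at x))"

definition L_smooth :: "('a::real_inner \<Rightarrow> real) \<Rightarrow> ('a \<Rightarrow> real) \<Rightarrow> ('a \<Rightarrow> 'a) \<Rightarrow> real \<Rightarrow> bool" where
  "L_smooth nrm f gradf L \<longleftrightarrow> L > 0 \<and> is_gradient f gradf \<and> continuous_on UNIV gradf \<and>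
     (\<forall>x y. dual_norm nrm (gradf x - gradf y) \<le> L * nrm (x - y))"

definition weakly_quasi_convex :: "('a::real_inner \<Rightarrow> real) \<Rightarrow> ('a \<Rightarrow> 'a) \<Rightarrow> real \<Rightarrow> 'a \<Rightarrow> bool" where
  "weakly_quasi_convex f gradf \<gamma> xs \<longleftrightarrow> 0 < \<gamma> \<and> \<gamma> \<le> 1 \<and> (\<forall>x. f xs \<le> f x) \<and>
     (\<forall>x. \<gamma> * (f x - f xs) \<le> gradf x \<bullet> (x - xs))"

definition prox_function :: "('a::real_inner \<Rightarrow> real) \<Rightarrow> ('a \<Rightarrow> real) \<Rightarrow> ('a \<Rightarrow> 'a) \<Rightarrow> bool" where
  "prox_function nrm d gradd \<longleftrightarrow> is_gradient d gradd \<and> continuous_on UNIV gradd \<and>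
     convex_on UNIV d \<and>
     (\<forall>x y. d y - d x - gradd x \<bullet> (y - x) \<ge> 1/2 * (nrm (y - x))\<^sup>2) \<and>
     (\<forall>x. 0 \<le> d x) \<and> (\<exists>x. d x = 0)"

definition bregman :: "('a::real_inner \<Rightarrow> real) \<Rightarrow> ('a \<Rightarrow> 'a) \<Rightarrow> 'a \<Rightarrow> 'a \<Rightarrow> real" where
  "bregman d gradd x z = d x - d z - gradd z \<bullet> (x - z)"

definition agm_psi :: "('a::real_inner \<Rightarrow> real) \<Rightarrow> ('a \<Rightarrow> 'a) \<Rightarrow> ('a \<Rightarrow> real) \<Rightarrow> ('a \<Rightarrow> 'a)
    \<Rightarrow> 'a \<Rightarrow> (nat \<Rightarrow> real) \<Rightarrow> (nat \<Rightarrow> 'a) \<Rightarrow> nat \<Rightarrow> 'a \<Rightarrow> real" where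
  "agm_psi f gradf d gradd x0 a y k z =
     bregman d gradd z x0 + (\<Sum>i<k. a (Suc i) * (f (y i) + gradf (y i) \<bullet> (z - y i)))"

text \<open>A run of N steps of AGMsDR. optA = True: Option (a) in every step; optA = False:
  Option (b) in every step. Step 1 is performed for k <= N (so that y^N is defined),
  steps 2 and 3 for k < N.\<close>
definition AGMsDR_run :: "('a::real_inner \<Rightarrow> real) \<Rightarrow> ('a \<Rightarrow> real) \<Rightarrow> ('a \<Rightarrow> 'a) \<Rightarrow>
    ('a \<Rightarrow> real) \<Rightarrow> ('a \<Rightarrow> 'a) \<Rightarrow> ('a \<Rightarrow> 'a) \<Rightarrow> real \<Rightarrow> bool \<Rightarrow> nat \<Rightarrow>
    (nat \<Rightarrow> 'a) \<Rightarrow> (nat \<Rightarrow> 'a) \<Rightarrow> (nat \<Rightarrow> 'a) \<Rightarrow> (nat \<Rightarrow> real) \<Rightarrow> (nat \<Rightarrow> real) \<Rightarrow>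
    (nat \<Rightarrow> real) \<Rightarrow> (nat \<Rightarrow> real) \<Rightarrow> bool" where
  "AGMsDR_run nrm f gradf d gradd sharp L optA N x v y beta h a A \<longleftrightarrow>
     A 0 = 0 \<and> v 0 = x 0 \<and>
     (\<forall>k\<le>N. 0 \<le> beta k \<and> beta k \<le> 1 \<and>
        (\<forall>b\<in>{0..1}. f (v k + beta k *\<^sub>R (x k - v k)) \<le> f (v k + b *\<^sub>R (x k - v k))) \<and>
        y k = v k + beta k *\<^sub>R (x k - v k)) \<and>
     (\<forall>k<N.
        (if optA then
           (\<forall>z. f (y k) + gradf (y k) \<bullet> (x (Suc k) - y k) + L / 2 * (nrm (x (Suc k) - y k))\<^sup>2
                 \<le> f (y k) + gradf (y k) \<bullet> (z - y k) + L / 2 * (nrm (z - y k))\<^sup>2) \<and>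
           a (Suc k) > 0 \<and> (a (Suc k))\<^sup>2 / (A k + a (Suc k)) = 1 / L
         else
           h (Suc k) \<ge> 0 \<and>
           (\<forall>t\<ge>0. f (y k - h (Suc k) *\<^sub>R sharp (gradf (y k))) \<le> f (y k - t *\<^sub>R sharp (gradf (y k)))) \<and>
           x (Suc k) = y k - h (Suc k) *\<^sub>R sharp (gradf (y k)) \<and>
           is_arg_max id (\<lambda>s. f (y k) - s\<^sup>2 / (2 * (A k + s)) * (dual_norm nrm (gradf (y k)))\<^sup>2
                                  = f (x (Suc k))) (a (Suc k))) \<and>
        A (Suc k) = A k + a (Suc k) \<and>
        (\<forall>z. agm_psi f gradf d gradd (x 0) a y (Suc k) (v (Suc k))
               \<le> agm_psi f gradf d gradd (x 0) a y (Suc k) z))"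

end

theory Submission
  imports Defs
begin


lemma nrm_basic:
  assumes "is_norm nrm"
  shows "nrm 0 = 0" "nrm (- x) = nrm x" "nrm x \<ge> 0" "nrm (x + y) \<le> nrm x + nrm y"
    "nrm (c *\<^sub>R x) = \<bar>c\<bar> * nrm x" "nrm (x - y) = nrm (y - x)"
proof -
  have h0: "\<forall>x. nrm x = 0 \<longleftrightarrow> x = 0" and ht: "\<forall>x y. nrm (x + y) \<le> nrm x + nrm y"
    and hs: "\<forall>c x. nrm (c *\<^sub>R x) = \<bar>c\<bar> * nrm x" using assms unfolding is_norm_def by auto
  show z: "nrm 0 = 0" using h0 by simp
  show n: "nrm (- x) = nrm x" for x using hs[rule_format, of "-1" x] by simp
  show "nrm x \<ge> 0" using ht[rule_format, of x "-x"] n[of x] z by simp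
  show "nrm (x + y) \<le> nrm x + nrm y" using ht by simp
  show "nrm (c *\<^sub>R x) = \<bar>c\<bar> * nrm x" using hs by simp
  show "nrm (x - y) = nrm (y - x)" using n[of "x - y"] by simp
qed

lemma nrm_sum:
  assumes "is_norm nrm"
  shows "nrm (sum g S) \<le> (\<Sum>i\<in>S. nrm (g i))"
proof (induction S rule: infinite_finite_induct)
  case (infinite A) then show ?case using nrm_basic[OF assms] by simp
next
  case empty then show ?case using nrm_basic[OF assms] by simp
next
  case (insert i F)
  then show ?case using nrm_basic(4)[OF assms, of "g i" "sum g F"] by simp
qed

lemma nrm_upper:
  fixes nrm :: "'a::euclidean_space \<Rightarrow> real"
  assumes "is_norm nrm"
  shows "\<exists>M\<ge>0. \<forall>x. nrm x \<le> M * norm x"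
proof -
  define M where "M = (\<Sum>b\<in>Basis. nrm (b::'a))"
  have "nrm x \<le> M * norm x" for x
  proof -
    have "nrm x = nrm (\<Sum>b\<in>Basis. (x \<bullet> b) *\<^sub>R b)" by (simp add: euclidean_representation)
    also have "\<dots> \<le> (\<Sum>b\<in>Basis. nrm ((x \<bullet> b) *\<^sub>R b))" by (rule nrm_sum[OF assms])
    also have "\<dots> = (\<Sum>b\<in>Basis. \<bar>x \<bullet> b\<bar> * nrm b)" using nrm_basic(5)[OF assms] by simp
    also have "\<dots> \<le> (\<Sum>b\<in>Basis. norm x * nrm b)"
      by (rule sum_mono, rule mult_right_mono) (auto simp: Basis_le_norm nrm_basic[OF assms])
    finally show ?thesis by (simp add: M_def sum_distrib_left mult.commute)
  qed
  moreover have "M \<ge> 0" unfolding M_def by (rule sum_nonneg) (simp add: nrm_basic[OF assms])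
  ultimately show ?thesis by blast
qed

lemma nrm_lower:
  fixes nrm :: "'a::euclidean_space \<Rightarrow> real"
  assumes "is_norm nrm"
  shows "\<exists>c>0. \<forall>x. c * norm x \<le> nrm x"
proof -
  obtain M where M: "M \<ge> 0" "\<forall>x. nrm x \<le> M * norm x" using nrm_upper[OF assms] by blast
  have cont: "continuous_on UNIV nrm"
  proof (rule continuous_onI)
    fix x e assume e: "(0::real) < e"
    show "\<exists>d>0. \<forall>x'\<in>UNIV. dist x' x < d \<longrightarrow> dist (nrm x') (nrm x) \<le> e"
    proof (intro exI[of _ "e / (M + 1)"] conjI ballI impI)
      show "0 < e / (M + 1)" using e M by simp
      fix x' assume d: "dist x' x < e / (M + 1)"
      have a: "nrm x' \<le> nrm x + nrm (x' - x)" using nrm_basic(4)[OF assms, of x "x' - x"] by simp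
      have b: "nrm x \<le> nrm x' + nrm (x' - x)" using nrm_basic(4)[OF assms, of x' "x - x'"] nrm_basic(6)[OF assms, of x' x] by simp
      have "nrm (x' - x) \<le> M * norm (x' - x)" using M by simp
      also have "\<dots> \<le> (M + 1) * norm (x' - x)" by (simp add: mult_right_mono)
      also have "\<dots> \<le> e" using d M by (simp add: dist_norm field_simps)
      finally show "dist (nrm x') (nrm x) \<le> e" using a b by (simp add: dist_real_def abs_le_iff)
    qed
  qed
  have "compact (sphere (0::'a) 1)" by simp
  moreover have "sphere (0::'a) 1 \<noteq> {}" by simp
  ultimately obtain x0 where x0: "x0 \<in> sphere 0 1" "\<forall>y\<in>sphere 0 1. nrm x0 \<le> nrm y"
    using continuous_attains_inf[of "sphere (0::'a) 1" nrm] continuous_on_subset[OF cont] by blast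
  have pos: "nrm x0 > 0"
  proof -
    have "x0 \<noteq> 0" using x0 by auto
    hence "nrm x0 \<noteq> 0" using assms unfolding is_norm_def by auto
    thus ?thesis using nrm_basic(3)[OF assms, of x0] by simp
  qed
  have "nrm x0 * norm x \<le> nrm x" for x
  proof (cases "x = 0")
    case True then show ?thesis by (simp add: nrm_basic[OF assms])
  next
    case False
    hence "(1 / norm x) *\<^sub>R x \<in> sphere 0 1" by simp
    hence "nrm x0 \<le> nrm ((1 / norm x) *\<^sub>R x)" using x0 by blast
    also have "\<dots> = nrm x / norm x" using nrm_basic(5)[OF assms] by simp
    finally show ?thesis using False by (simp add: field_simps)
  qed
  thus ?thesis using pos by blast
qed

lemma dual_norm_props:
  fixes nrm :: "'a::euclidean_space \<Rightarrow> real"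
  assumes "is_norm nrm"
  shows "g \<bullet> z \<le> dual_norm nrm g * nrm z" "dual_norm nrm g \<ge> 0"
proof -
  obtain c where c: "c > 0" "\<forall>x. c * norm x \<le> nrm x" using nrm_lower[OF assms] by blast
  have bdd: "bdd_above ((\<lambda>x. g \<bullet> x) ` {x. nrm x \<le> 1})"
  proof (rule bdd_aboveI2)
    fix x assume "x \<in> {x. nrm x \<le> 1}"
    hence "norm x \<le> 1 / c" using c by (auto simp: field_simps intro: order_trans)
    hence "norm g * norm x \<le> norm g * (1 / c)" by (intro mult_left_mono) auto
    thus "g \<bullet> x \<le> norm g / c" using norm_cauchy_schwarz[of g x] by simp
  qed
  have up: "g \<bullet> x \<le> dual_norm nrm g" if "nrm x \<le> 1" for x
    unfolding dual_norm_def by (rule cSUP_upper[OF _ bdd]) (use that in auto)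
  show "dual_norm nrm g \<ge> 0" using up[of 0] nrm_basic(1)[OF assms] by simp
  show "g \<bullet> z \<le> dual_norm nrm g * nrm z"
  proof (cases "z = 0")
    case True then show ?thesis by (simp add: nrm_basic[OF assms])
  next
    case False
    hence p: "nrm z > 0" using assms nrm_basic(3)[OF assms, of z] unfolding is_norm_def by force
    have "nrm ((1 / nrm z) *\<^sub>R z) = 1" using p nrm_basic(5)[OF assms] by simp
    hence "g \<bullet> ((1 / nrm z) *\<^sub>R z) \<le> dual_norm nrm g" using up[of "(1 / nrm z) *\<^sub>R z"] by linarith
    thus ?thesis using p by (simp add: field_simps)
  qed
qed



lemma line_deriv:
  assumes "is_gradient f gradf"
  shows "((\<lambda>t. f (p + t *\<^sub>R w)) has_real_derivative (gradf (p + t *\<^sub>R w) \<bullet> w)) (at t)"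
proof -
  have l: "((\<lambda>t. p + t *\<^sub>R w) has_derivative (\<lambda>h. h *\<^sub>R w)) (at t)"
    by (auto intro!: derivative_eq_intros)
  have g: "(f has_derivative (\<lambda>h. gradf (p + t *\<^sub>R w) \<bullet> h)) (at (p + t *\<^sub>R w))"
    using assms unfolding is_gradient_def by blast
  have "((\<lambda>t. f (p + t *\<^sub>R w)) has_derivative (\<lambda>h. gradf (p + t *\<^sub>R w) \<bullet> (h *\<^sub>R w))) (at t)"
    using has_derivative_compose[OF l g] by simp
  moreover have "(\<lambda>h. gradf (p + t *\<^sub>R w) \<bullet> (h *\<^sub>R w)) = (*) (gradf (p + t *\<^sub>R w) \<bullet> w)"
    by (auto simp: fun_eq_iff)
  ultimately show ?thesis unfolding has_field_derivative_def by simp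
qed

lemma descent:
  fixes nrm :: "'a::euclidean_space \<Rightarrow> real"
  assumes N: "is_norm nrm" and S: "L_smooth nrm f gradf L"
  shows "f (p + z) \<le> f p + gradf p \<bullet> z + L / 2 * (nrm z)\<^sup>2"
proof -
  have G: "is_gradient f gradf" and Lip: "\<forall>x y. dual_norm nrm (gradf x - gradf y) \<le> L * nrm (x - y)"
    and Lp: "L > 0" using S unfolding L_smooth_def by auto
  define \<phi> where "\<phi> t = f (p + t *\<^sub>R z) - t * (gradf p \<bullet> z) - L / 2 * t\<^sup>2 * (nrm z)\<^sup>2" for t
  have "\<phi> 1 \<le> \<phi> 0"
  proof (rule DERIV_nonpos_imp_nonincreasing[of 0 1])
    fix t :: real assume t: "0 \<le> t" "t \<le> 1"
    have d: "DERIV \<phi> t :> gradf (p + t *\<^sub>R z) \<bullet> z - gradf p \<bullet> z - L / 2 * (2 * t) * (nrm z)\<^sup>2"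
      unfolding \<phi>_def
      by (rule line_deriv[OF G] derivative_eq_intros refl | simp)+
    have "(gradf (p + t *\<^sub>R z) - gradf p) \<bullet> z \<le> dual_norm nrm (gradf (p + t *\<^sub>R z) - gradf p) * nrm z"
      by (rule dual_norm_props[OF N])
    also have "\<dots> \<le> (L * nrm (t *\<^sub>R z)) * nrm z"
      using Lip[rule_format, of "p + t *\<^sub>R z" p] nrm_basic(3)[OF N, of z] by (intro mult_right_mono) auto
    also have "\<dots> = L * t * (nrm z)\<^sup>2" using nrm_basic(5)[OF N] t by (simp add: power2_eq_square)
    finally have "gradf (p + t *\<^sub>R z) \<bullet> z - gradf p \<bullet> z - L / 2 * (2 * t) * (nrm z)\<^sup>2 \<le> 0"
      by (simp add: inner_diff_left)
    with d show "\<exists>y. DERIV \<phi> t :> y \<and> y \<le> 0" by blast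
  qed simp
  thus ?thesis unfolding \<phi>_def by simp
qed

lemma descent_step:
  fixes nrm :: "'a::euclidean_space \<Rightarrow> real"
  assumes N: "is_norm nrm" and S: "L_smooth nrm f gradf L" and sh: "is_sharp nrm sharp"
  shows "f (p - (dual_norm nrm (gradf p) / L) *\<^sub>R sharp (gradf p))
           \<le> f p - (dual_norm nrm (gradf p))\<^sup>2 / (2 * L)"
proof -
  define G where "G = dual_norm nrm (gradf p)"
  define s where "s = sharp (gradf p)"
  have Lp: "L > 0" using S unfolding L_smooth_def by auto
  have s: "nrm s \<le> 1" "gradf p \<bullet> s = G" using sh unfolding is_sharp_def G_def s_def by auto
  have G0: "G \<ge> 0" unfolding G_def by (rule dual_norm_props[OF N])
  have "f (p + (- (G / L) *\<^sub>R s)) \<le> f p + gradf p \<bullet> (- (G / L) *\<^sub>R s) + L / 2 * (nrm (- (G / L) *\<^sub>R s))\<^sup>2"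
    by (rule descent[OF N S])
  also have "nrm (- (G / L) *\<^sub>R s) = G / L * nrm s"
  proof -
    have "nrm (- (G / L) *\<^sub>R s) = \<bar>- (G / L)\<bar> * nrm s" by (rule nrm_basic(5)[OF N])
    thus ?thesis using G0 Lp by simp
  qed
  also have "(G / L * nrm s)\<^sup>2 \<le> (G / L)\<^sup>2"
  proof -
    have "0 \<le> G / L * nrm s" using G0 Lp nrm_basic(3)[OF N, of s] by simp
    moreover have "G / L * nrm s \<le> G / L" using s G0 Lp mult_left_le[of "nrm s" "G / L"] by simp
    ultimately show ?thesis by (simp add: power_mono)
  qed
  hence "f p + gradf p \<bullet> (- (G / L) *\<^sub>R s) + L / 2 * (G / L * nrm s)\<^sup>2 \<le> f p - G * (G / L) + L / 2 * (G / L)\<^sup>2"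
    using s Lp by (simp add: mult_left_mono)
  also have "\<dots> = f p - G\<^sup>2 / (2 * L)" using Lp by (simp add: field_simps power2_eq_square)
  finally show ?thesis unfolding G_def s_def by simp
qed

lemma line_search:
  assumes G: "is_gradient f gradf" and b: "0 \<le> \<beta>" "\<beta> \<le> 1"
    and m: "\<forall>b\<in>{0..1}. f (v + \<beta> *\<^sub>R (x - v)) \<le> f (v + b *\<^sub>R (x - v))"
  shows "gradf (v + \<beta> *\<^sub>R (x - v)) \<bullet> (v - (v + \<beta> *\<^sub>R (x - v))) \<ge> 0"
proof (cases "\<beta> = 0")
  case True then show ?thesis by simp
next
  case False
  hence bp: "\<beta> > 0" using b by simp
  have D: "gradf (v + \<beta> *\<^sub>R (x - v)) \<bullet> (x - v) \<le> 0"
  proof (rule ccontr)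
    assume "\<not> ?thesis"
    then obtain e where e: "e > 0" "\<forall>h>0. h < e \<longrightarrow> f (v + (\<beta> - h) *\<^sub>R (x - v)) < f (v + \<beta> *\<^sub>R (x - v))"
      using DERIV_pos_inc_left[OF line_deriv[OF G, of v "x - v" \<beta>]] by auto
    define h where "h = min e \<beta> / 2"
    have "h > 0" "h < e" "h \<le> \<beta>" using e bp by (auto simp: h_def)
    hence "f (v + (\<beta> - h) *\<^sub>R (x - v)) < f (v + \<beta> *\<^sub>R (x - v))" using e by auto
    moreover have "\<beta> - h \<in> {0..1}" using \<open>h > 0\<close> \<open>h \<le> \<beta>\<close> b by auto
    ultimately show False using m by fastforce
  qed
  have "gradf (v + \<beta> *\<^sub>R (x - v)) \<bullet> (v - (v + \<beta> *\<^sub>R (x - v))) = - \<beta> * (gradf (v + \<beta> *\<^sub>R (x - v)) \<bullet> (x - v))"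
    by (simp add: inner_diff_right)
  thus ?thesis using D bp by (simp add: mult_nonpos_nonpos mult_le_0_iff)
qed

lemma strong_min:
  fixes nrm :: "'a::euclidean_space \<Rightarrow> real"
  assumes P: "prox_function nrm d gradd"
    and F: "\<And>z. F z = d z + q \<bullet> z + c"
    and m: "\<And>z. F v \<le> F z"
  shows "F z \<ge> F v + 1/2 * (nrm (z - v))\<^sup>2"
proof -
  have G: "is_gradient d gradd" and sc: "\<forall>x y. d y - d x - gradd x \<bullet> (y - x) \<ge> 1/2 * (nrm (y - x))\<^sup>2"
    using P unfolding prox_function_def by auto
  define w where "w = z - v"
  have "DERIV (\<lambda>t. F (v + t *\<^sub>R w)) 0 :> gradd (v + 0 *\<^sub>R w) \<bullet> w + q \<bullet> w"
    unfolding F by (rule line_deriv[OF G] derivative_eq_intros refl | simp add: inner_add_right)+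
  hence "gradd (v + 0 *\<^sub>R w) \<bullet> w + q \<bullet> w = 0"
    by (rule DERIV_local_min[where d=1]) (auto intro: m)
  hence "gradd v \<bullet> w + q \<bullet> w = 0" by simp
  moreover have "d z - d v - gradd v \<bullet> (z - v) \<ge> 1/2 * (nrm (z - v))\<^sup>2" using sc by blast
  ultimately show ?thesis unfolding F w_def by (simp add: inner_diff_right algebra_simps)
qed


lemma growth_arith:
  fixes u w k :: real
  assumes "0 \<le> w" "w \<le> u" "0 < u" "u \<le> (u - w)\<^sup>2" "k\<^sup>2 / 4 \<le> w" "0 \<le> k"
  shows "(k + 1)\<^sup>2 / 4 \<le> u"
proof -
  define s where "s = sqrt u"
  have s: "s > 0" "s\<^sup>2 = u" using assms(3) by (auto simp: s_def)
  have "s \<le> u - w"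
  proof -
    have "s\<^sup>2 \<le> (u - w)\<^sup>2" using s(2) assms(4) by linarith
    thus ?thesis by (rule power2_le_imp_le) (use assms(2) in simp)
  qed
  hence "k\<^sup>2 / 4 \<le> s\<^sup>2 - s" using s(2) assms(5) by linarith
  hence "s \<ge> (k + 1) / 2"
  proof -
    assume h: "k\<^sup>2 / 4 \<le> s\<^sup>2 - s"
    show ?thesis
    proof (rule ccontr)
      assume "\<not> ?thesis"
      hence "s < (k + 1) / 2" by simp
      show False
      proof (cases "s \<le> 1/2")
        case True
        have "s * (s - 1) < 0" using True s(1) by (intro mult_pos_neg) auto
        hence "s\<^sup>2 - s < 0" by (simp add: power2_eq_square algebra_simps)
        moreover have "k\<^sup>2 / 4 \<ge> 0" by simp
        ultimately show False using h by linarith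
      next
        case False
        have a: "0 \<le> s - 1/2" "s - 1/2 < k / 2" using False \<open>s < (k + 1) / 2\<close> by auto
        hence "(s - 1/2) * (s - 1/2) < (k/2) * (k/2)" using assms(6) by (intro mult_strict_mono) auto
        thus False using h by (simp add: power2_eq_square algebra_simps)
      qed
    qed
  qed
  hence "((k + 1) / 2)\<^sup>2 \<le> s\<^sup>2" using assms(6) by (intro power_mono) auto
  thus ?thesis using s by (simp add: power_divide)
qed


lemma model_step:
  fixes nrm :: "'a::euclidean_space \<Rightarrow> real"
  assumes N: "is_norm nrm" and Lp: "L > 0" and sh: "is_sharp nrm sharp"
  shows "f p + g \<bullet> ((p - (dual_norm nrm g / L) *\<^sub>R sharp g) - p)
           + L / 2 * (nrm ((p - (dual_norm nrm g / L) *\<^sub>R sharp g) - p))\<^sup>2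
           \<le> f p - (dual_norm nrm g)\<^sup>2 / (2 * L)"
proof -
  define G where "G = dual_norm nrm g"
  define s where "s = sharp g"
  have s: "nrm s \<le> 1" "g \<bullet> s = G" using sh unfolding is_sharp_def G_def s_def by auto
  have G0: "G \<ge> 0" unfolding G_def by (rule dual_norm_props[OF N])
  have e: "(p - (G / L) *\<^sub>R s) - p = - (G / L) *\<^sub>R s" by simp
  have "nrm (- (G / L) *\<^sub>R s) = \<bar>- (G / L)\<bar> * nrm s" by (rule nrm_basic(5)[OF N])
  hence n: "nrm (- (G / L) *\<^sub>R s) = G / L * nrm s" using G0 Lp by simp
  have "(G / L * nrm s)\<^sup>2 \<le> (G / L)\<^sup>2"
  proof -
    have "0 \<le> G / L * nrm s" using G0 Lp nrm_basic(3)[OF N, of s] by simp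
    moreover have "G / L * nrm s \<le> G / L" using s G0 Lp mult_left_le[of "nrm s" "G / L"] by simp
    ultimately show ?thesis by (simp add: power_mono)
  qed
  hence "f p + g \<bullet> (- (G / L) *\<^sub>R s) + L / 2 * (G / L * nrm s)\<^sup>2 \<le> f p - G * (G / L) + L / 2 * (G / L)\<^sup>2"
    using s Lp by (simp add: mult_left_mono)
  also have "\<dots> = f p - G\<^sup>2 / (2 * L)" using Lp by (simp add: field_simps power2_eq_square)
  finally show ?thesis unfolding G_def[symmetric] s_def[symmetric] e n .
qed

lemma key_step:
  fixes nrm :: "'a::euclidean_space \<Rightarrow> real"
  assumes N: "is_norm nrm" and S: "L_smooth nrm f gradf L" and sh: "is_sharp nrm sharp"
    and nz: "gradf yk \<noteq> 0" and Ak: "Ak \<ge> 0" and xs: "\<And>z. f xs \<le> f z"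
    and opt: "if optA then
           (\<forall>z. f yk + gradf yk \<bullet> (xn - yk) + L / 2 * (nrm (xn - yk))\<^sup>2
                 \<le> f yk + gradf yk \<bullet> (z - yk) + L / 2 * (nrm (z - yk))\<^sup>2) \<and>
           an > 0 \<and> an\<^sup>2 / (Ak + an) = 1 / L
         else
           hn \<ge> 0 \<and>
           (\<forall>t\<ge>0. f (yk - hn *\<^sub>R sharp (gradf yk)) \<le> f (yk - t *\<^sub>R sharp (gradf yk))) \<and>
           xn = yk - hn *\<^sub>R sharp (gradf yk) \<and>
           is_arg_max id (\<lambda>s. f yk - s\<^sup>2 / (2 * (Ak + s)) * (dual_norm nrm (gradf yk))\<^sup>2
                                  = f xn) an"
  shows "0 < an \<and> Ak + an \<le> L * an\<^sup>2 \<and>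
         (Ak + an) * f xn \<le> (Ak + an) * f yk - an\<^sup>2 * (dual_norm nrm (gradf yk))\<^sup>2 / 2 \<and>
         f xn \<le> f yk - (dual_norm nrm (gradf yk))\<^sup>2 / (2 * L)"
proof -
  define G where "G = dual_norm nrm (gradf yk)"
  define g where "g = gradf yk"
  define zs where "zs = yk - (G / L) *\<^sub>R sharp g"
  have Lp: "L > 0" using S unfolding L_smooth_def by auto
  have Gp: "G > 0"
  proof -
    have "g \<bullet> g \<le> G * nrm g" unfolding G_def g_def by (rule dual_norm_props[OF N])
    moreover have "g \<bullet> g > 0" using nz unfolding g_def by simp
    moreover have "G \<ge> 0" unfolding G_def by (rule dual_norm_props[OF N])
    ultimately show ?thesis by (metis less_eq_real_def mult_not_zero not_le)
  qed
  have M: "f yk + g \<bullet> (zs - yk) + L / 2 * (nrm (zs - yk))\<^sup>2 \<le> f yk - G\<^sup>2 / (2 * L)"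
    unfolding zs_def G_def g_def by (rule model_step[OF N Lp sh])
  have D: "f zs \<le> f yk - G\<^sup>2 / (2 * L)"
    using descent[OF N S, of yk "zs - yk"] M unfolding g_def by simp
  show ?thesis
  proof (cases optA)
    case True
    hence o: "\<forall>z. f yk + g \<bullet> (xn - yk) + L / 2 * (nrm (xn - yk))\<^sup>2
                 \<le> f yk + g \<bullet> (z - yk) + L / 2 * (nrm (z - yk))\<^sup>2"
      and an: "an > 0" and eq: "an\<^sup>2 / (Ak + an) = 1 / L" using opt unfolding g_def by auto
    have fx: "f xn \<le> f yk - G\<^sup>2 / (2 * L)"
      using descent[OF N S, of yk "xn - yk"] o[rule_format, of zs] M unfolding g_def by simp
    have pos: "Ak + an > 0" using Ak an by simp
    have e2: "an\<^sup>2 * L = Ak + an" using eq pos Lp by (simp add: field_simps)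
    have "(Ak + an) * f xn \<le> (Ak + an) * (f yk - G\<^sup>2 / (2 * L))"
      using fx pos by (simp add: mult_left_mono)
    also have "\<dots> = (Ak + an) * f yk - an\<^sup>2 * G\<^sup>2 / 2"
      using e2[symmetric] Lp by (simp add: field_simps)
    finally show ?thesis using an e2 fx unfolding G_def by (simp add: mult.commute)
  next
    case False
    hence hn: "hn \<ge> 0" and ls: "\<forall>t\<ge>0. f (yk - hn *\<^sub>R sharp g) \<le> f (yk - t *\<^sub>R sharp g)"
      and xn: "xn = yk - hn *\<^sub>R sharp g"
      and am: "is_arg_max id (\<lambda>s. f yk - s\<^sup>2 / (2 * (Ak + s)) * G\<^sup>2 = f xn) an"
      using opt unfolding g_def G_def by auto
    have fx: "f xn \<le> f yk - G\<^sup>2 / (2 * L)"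
      using ls[rule_format, of "G / L"] Gp Lp D xn unfolding zs_def by simp
    define c where "c = f yk - f xn"
    have cpos: "c \<ge> G\<^sup>2 / (2 * L)" using fx unfolding c_def by simp
    have cp: "c > 0" using cpos Gp Lp by (smt (verit) divide_pos_pos zero_less_power)
    have Pa: "an\<^sup>2 / (2 * (Ak + an)) * G\<^sup>2 = c" using am unfolding is_arg_max_def c_def by auto
    have pos: "Ak + an > 0"
    proof (rule ccontr)
      assume "\<not> ?thesis"
      hence "an\<^sup>2 / (2 * (Ak + an)) \<le> 0" by (simp add: divide_nonneg_nonpos)
      hence "an\<^sup>2 / (2 * (Ak + an)) * G\<^sup>2 \<le> 0" by (rule mult_nonpos_nonneg) simp_all
      thus False using Pa cp by simp
    qed
    have e3: "an\<^sup>2 * G\<^sup>2 = 2 * c * (Ak + an)" using Pa pos by (simp add: field_simps)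
    have "((Ak + an) / L) * G\<^sup>2 \<le> an\<^sup>2 * G\<^sup>2"
    proof -
      have "2 * c * (Ak + an) \<ge> 2 * (G\<^sup>2 / (2 * L)) * (Ak + an)"
        by (rule mult_right_mono) (use cpos pos in auto)
      moreover have "2 * (G\<^sup>2 / (2 * L)) * (Ak + an) = ((Ak + an) / L) * G\<^sup>2" using Lp by (simp add: field_simps)
      ultimately show ?thesis using e3 by linarith
    qed
    hence "an\<^sup>2 \<ge> (Ak + an) / L" by (rule mult_right_le_imp_le) (use Gp in simp)
    hence q: "Ak + an \<le> L * an\<^sup>2" using Lp by (simp add: field_simps)
    \<comment> \<open>positivity via the positive root\<close>
    define p where "p = 2 * c / G\<^sup>2"
    have pp: "p > 0" using cp Gp unfolding p_def by simp
    define r where "r = sqrt (p\<^sup>2 + 4 * p * Ak)"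
    have "0 \<le> 4 * p * Ak" using pp Ak by simp
    hence rnn: "0 \<le> p\<^sup>2 + 4 * p * Ak" using zero_le_power2[of p] by linarith
    hence r2: "r\<^sup>2 = p\<^sup>2 + 4 * p * Ak" unfolding r_def by simp
    have r0: "r \<ge> 0" unfolding r_def using rnn by simp
    define sp where "sp = (p + r) / 2"
    have spp: "sp > 0" using pp r0 unfolding sp_def by simp
    have sq: "sp\<^sup>2 = p * (Ak + sp)"
      unfolding sp_def using r2 by (simp add: power2_eq_square field_simps)
    have "sp\<^sup>2 / (2 * (Ak + sp)) * G\<^sup>2 = c"
    proof -
      have "Ak + sp > 0" using Ak spp by simp
      hence "sp\<^sup>2 / (2 * (Ak + sp)) = p / 2" using sq by (simp add: field_simps)
      thus ?thesis unfolding p_def using Gp by simp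
    qed
    hence "f yk - sp\<^sup>2 / (2 * (Ak + sp)) * G\<^sup>2 = f xn" unfolding c_def by simp
    hence "\<not> an < sp" using am unfolding is_arg_max_def by auto
    hence "an > 0" using spp by simp
    moreover have "(Ak + an) * f xn = (Ak + an) * f yk - an\<^sup>2 * G\<^sup>2 / 2"
      using e3 unfolding c_def by (simp add: algebra_simps)
    ultimately show ?thesis using q fx unfolding G_def by simp
  qed
qed



lemma psi_Suc: "agm_psi f gradf d gradd x0 a y (Suc k) z
   = agm_psi f gradf d gradd x0 a y k z + a (Suc k) * (f (y k) + gradf (y k) \<bullet> (z - y k))"
  unfolding agm_psi_def by simp

lemma psi_form: "\<exists>q c. \<forall>z. agm_psi f gradf d gradd x0 a y k z = d z + q \<bullet> z + c"
proof (induction k)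
  case 0
  show ?case
    by (rule exI[of _ "- gradd x0"], rule exI[of _ "gradd x0 \<bullet> x0 - d x0"])
       (simp add: agm_psi_def bregman_def inner_diff_right)
next
  case (Suc k)
  then obtain q c where qc: "\<forall>z. agm_psi f gradf d gradd x0 a y k z = d z + q \<bullet> z + c" by blast
  show ?case
    by (rule exI[of _ "q + a (Suc k) *\<^sub>R gradf (y k)"],
        rule exI[of _ "c + a (Suc k) * (f (y k) - gradf (y k) \<bullet> y k)"])
       (simp add: psi_Suc qc inner_diff_right inner_add_left algebra_simps)
qed

lemma min_avg:
  fixes g :: "nat \<Rightarrow> real"
  assumes "finite S" "S \<noteq> {}"
  shows "Min (g ` S) * card S \<le> sum g S"
proof -
  have "Min (g ` S) * card S = (\<Sum>k\<in>S. Min (g ` S))" by simp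
  also have "\<dots> \<le> sum g S" by (rule sum_mono) (use assms in simp)
  finally show ?thesis .
qed

theorem mainTheorem4:
  fixes nrm :: "'a::euclidean_space \<Rightarrow> real"
    and f d :: "'a \<Rightarrow> real" and gradf gradd sharp :: "'a \<Rightarrow> 'a"
    and L :: real and xs :: 'a and optA :: bool and N :: nat
    and x v y :: "nat \<Rightarrow> 'a" and beta h a A :: "nat \<Rightarrow> real"
  assumes "is_norm nrm"
    and "is_sharp nrm sharp"
    and "prox_function nrm d gradd"
    and "L_smooth nrm f gradf L"
    and "weakly_quasi_convex f gradf 1 xs"
    and "N \<ge> 1"
    and "AGMsDR_run nrm f gradf d gradd sharp L optA N x v y beta h a A"
    and "\<forall>k<N. gradf (y k) \<noteq> 0"
  shows "Min ((\<lambda>k. (dual_norm nrm (gradf (y k)))\<^sup>2) ` {nat \<lceil>real N / 2\<rceil>..N})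
           \<le> 64 * L\<^sup>2 * bregman d gradd xs (x 0) / (real N) ^ 3 \<and>
         f (x N) - f xs \<le> 4 * L * bregman d gradd xs (x 0) / (real N)\<^sup>2"
proof -
  note Nn = assms(1) and sh = assms(2) and P = assms(3) and S = assms(4) and W = assms(5)
    and N1 = assms(6) and R = assms(7) and nz = assms(8)
  define psi where "psi k z = agm_psi f gradf d gradd (x 0) a y k z" for k z
  define G where "G k = dual_norm nrm (gradf (y k))" for k
  define V where "V = bregman d gradd xs (x 0)"
  have Lp: "L > 0" and Gf: "is_gradient f gradf" using S unfolding L_smooth_def by auto
  have wq1: "\<And>z. f xs \<le> f z" and wq2: "\<And>z. f z - f xs \<le> gradf z \<bullet> (z - xs)"
    using W unfolding weakly_quasi_convex_def by auto
  have sc: "\<And>x z. d z - d x - gradd x \<bullet> (z - x) \<ge> 1/2 * (nrm (z - x))\<^sup>2"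
    using P unfolding prox_function_def by auto
  have breg0: "bregman d gradd z w \<ge> 0" for z w
  proof -
    have "0 \<le> 1/2 * (nrm (z - w))\<^sup>2" by simp
    thus ?thesis using sc[of z w] unfolding bregman_def by linarith
  qed
  have V0: "V \<ge> 0" unfolding V_def by (rule breg0)
  have R0: "A 0 = 0" "v 0 = x 0" using R unfolding AGMsDR_run_def by auto
  have R1: "\<forall>k\<le>N. 0 \<le> beta k \<and> beta k \<le> 1 \<and>
        (\<forall>b\<in>{0..1}. f (v k + beta k *\<^sub>R (x k - v k)) \<le> f (v k + b *\<^sub>R (x k - v k))) \<and>
        y k = v k + beta k *\<^sub>R (x k - v k)" using R unfolding AGMsDR_run_def by blast
  have RA: "\<forall>k<N. A (Suc k) = A k + a (Suc k)" using R unfolding AGMsDR_run_def by blast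
  have Rv: "\<forall>k<N. \<forall>z. psi (Suc k) (v (Suc k)) \<le> psi (Suc k) z"
    using R unfolding AGMsDR_run_def psi_def by blast
  have Ro: "\<forall>k<N. (if optA then
           (\<forall>z. f (y k) + gradf (y k) \<bullet> (x (Suc k) - y k) + L / 2 * (nrm (x (Suc k) - y k))\<^sup>2
                 \<le> f (y k) + gradf (y k) \<bullet> (z - y k) + L / 2 * (nrm (z - y k))\<^sup>2) \<and>
           a (Suc k) > 0 \<and> (a (Suc k))\<^sup>2 / (A k + a (Suc k)) = 1 / L
         else
           h (Suc k) \<ge> 0 \<and>
           (\<forall>t\<ge>0. f (y k - h (Suc k) *\<^sub>R sharp (gradf (y k))) \<le> f (y k - t *\<^sub>R sharp (gradf (y k)))) \<and>
           x (Suc k) = y k - h (Suc k) *\<^sub>R sharp (gradf (y k)) \<and>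
           is_arg_max id (\<lambda>s. f (y k) - s\<^sup>2 / (2 * (A k + s)) * (dual_norm nrm (gradf (y k)))\<^sup>2
                                  = f (x (Suc k))) (a (Suc k)))"
    using R unfolding AGMsDR_run_def by blast
  have key: "k < N \<Longrightarrow> A k \<ge> 0 \<Longrightarrow> 0 < a (Suc k) \<and> A k + a (Suc k) \<le> L * (a (Suc k))\<^sup>2 \<and>
         (A k + a (Suc k)) * f (x (Suc k)) \<le> (A k + a (Suc k)) * f (y k) - (a (Suc k))\<^sup>2 * (G k)\<^sup>2 / 2 \<and>
         f (x (Suc k)) \<le> f (y k) - (G k)\<^sup>2 / (2 * L)" for k
    unfolding G_def
    by (rule key_step[where yk="y k" and optA=optA and xn="x (Suc k)" and an="a (Suc k)"
          and hn="h (Suc k)" and Ak="A k", OF Nn S sh _ _ wq1])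
       (use nz Ro in blast)+
  have Agrow: "k \<le> N \<Longrightarrow> A k \<ge> 0 \<and> L * A k \<ge> (real k)\<^sup>2 / 4" for k
  proof (induction k)
    case 0 then show ?case using R0 by simp
  next
    case (Suc k)
    hence k: "k < N" "A k \<ge> 0" "L * A k \<ge> (real k)\<^sup>2 / 4" by auto
    have kk: "0 < a (Suc k)" "A k + a (Suc k) \<le> L * (a (Suc k))\<^sup>2" using key[OF k(1,2)] by auto
    have AS: "A (Suc k) = A k + a (Suc k)" using RA k by auto
    have "(real k + 1)\<^sup>2 / 4 \<le> L * A (Suc k)"
    proof (rule growth_arith)
      show "0 \<le> L * A k" using Lp k by simp
      show "L * A k \<le> L * A (Suc k)" using AS kk Lp by simp
      show "0 < L * A (Suc k)" using AS kk k Lp by simp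
      show "L * A (Suc k) \<le> (L * A (Suc k) - L * A k)\<^sup>2"
      proof -
        have "L * A (Suc k) \<le> L * (L * (a (Suc k))\<^sup>2)" using AS kk Lp by simp
        also have "\<dots> = (L * A (Suc k) - L * A k)\<^sup>2" using AS by (simp add: power2_eq_square algebra_simps)
        finally show ?thesis .
      qed
      show "(real k)\<^sup>2 / 4 \<le> L * A k" using k by simp
      show "0 \<le> real k" by simp
    qed
    thus ?case using AS kk k by (simp add: add.commute)
  qed
  have Apos: "1 \<le> k \<Longrightarrow> k \<le> N \<Longrightarrow> A k > 0" for k
  proof -
    assume "1 \<le> k" "k \<le> N"
    hence "L * A k \<ge> (real k)\<^sup>2 / 4" "(real k)\<^sup>2 / 4 > 0" using Agrow by auto
    hence "L * A k > 0" by linarith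
    thus "A k > 0" using Lp by (simp add: zero_less_mult_iff)
  qed
  have vmin: "k \<le> N \<Longrightarrow> psi k (v k) \<le> psi k z" for k z
  proof (cases k)
    case 0 then show ?thesis using R0 breg0[of z "x 0"] by (simp add: psi_def agm_psi_def bregman_def)
  next
    case (Suc j) assume "k \<le> N" then show ?thesis using Rv Suc by auto
  qed
  have strong: "k \<le> N \<Longrightarrow> psi k z \<ge> psi k (v k) + 1/2 * (nrm (z - v k))\<^sup>2" for k z
  proof -
    assume kN: "k \<le> N"
    obtain q c where qc: "\<forall>z. psi k z = d z + q \<bullet> z + c" using psi_form unfolding psi_def by blast
    show ?thesis by (rule strong_min[OF P, of "psi k" q c]) (use qc vmin[OF kN] in auto)
  qed
  have fyx: "k \<le> N \<Longrightarrow> f (y k) \<le> f (x k)" for k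
  proof -
    assume "k \<le> N"
    hence "(\<forall>b\<in>{0..1}. f (v k + beta k *\<^sub>R (x k - v k)) \<le> f (v k + b *\<^sub>R (x k - v k)))"
      "y k = v k + beta k *\<^sub>R (x k - v k)" using R1 by auto
    thus ?thesis by (metis atLeastAtMost_iff order_refl zero_le_one scaleR_one add.commute diff_add_cancel)
  qed
  have gyv: "k \<le> N \<Longrightarrow> gradf (y k) \<bullet> (v k - y k) \<ge> 0" for k
  proof -
    assume "k \<le> N"
    hence b: "0 \<le> beta k" "beta k \<le> 1" "(\<forall>b\<in>{0..1}. f (v k + beta k *\<^sub>R (x k - v k)) \<le> f (v k + b *\<^sub>R (x k - v k)))"
      and yk: "y k = v k + beta k *\<^sub>R (x k - v k)" using R1 by auto
    show ?thesis unfolding yk by (rule line_search[OF Gf b])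
  qed
  have inv: "k \<le> N \<Longrightarrow> A k * f (x k) \<le> psi k (v k)" for k
  proof (induction k)
    case 0 then show ?case using R0 by (simp add: psi_def agm_psi_def bregman_def)
  next
    case (Suc k)
    hence k: "k < N" "k \<le> N" by auto
    have IH: "A k * f (x k) \<le> psi k (v k)" using Suc k by auto
    have Ak: "A k \<ge> 0" using Agrow k by auto
    have kk: "0 < a (Suc k)"
      "(A k + a (Suc k)) * f (x (Suc k)) \<le> (A k + a (Suc k)) * f (y k) - (a (Suc k))\<^sup>2 * (G k)\<^sup>2 / 2"
      using key[OF k(1) Ak] by auto
    have AS: "A (Suc k) = A k + a (Suc k)" using RA k by auto
    define w where "w = v (Suc k) - v k"
    define t where "t = nrm w"
    have t0: "t \<ge> 0" unfolding t_def by (rule nrm_basic(3)[OF Nn])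
    have gw: "gradf (y k) \<bullet> w \<ge> - (G k * t)"
    proof -
      have "gradf (y k) \<bullet> (- w) \<le> G k * nrm (- w)" unfolding G_def by (rule dual_norm_props[OF Nn])
      thus ?thesis unfolding t_def using nrm_basic(2)[OF Nn, of w] by simp
    qed
    have quad: "1/2 * t\<^sup>2 - a (Suc k) * (G k * t) \<ge> - ((a (Suc k))\<^sup>2 * (G k)\<^sup>2 / 2)"
    proof -
      have "0 \<le> 1/2 * (t - a (Suc k) * G k)\<^sup>2" by simp
      thus ?thesis by (simp add: power2_eq_square algebra_simps)
    qed
    have "psi (Suc k) (v (Suc k)) = psi k (v (Suc k)) + a (Suc k) * (f (y k) + gradf (y k) \<bullet> (v (Suc k) - y k))"
      unfolding psi_def by (rule psi_Suc)
    also have "gradf (y k) \<bullet> (v (Suc k) - y k) = gradf (y k) \<bullet> w + gradf (y k) \<bullet> (v k - y k)"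
      unfolding w_def by (simp add: inner_diff_right)
    finally have e: "psi (Suc k) (v (Suc k)) = psi k (v (Suc k)) + a (Suc k) * f (y k)
        + a (Suc k) * (gradf (y k) \<bullet> w) + a (Suc k) * (gradf (y k) \<bullet> (v k - y k))"
      by (simp add: algebra_simps)
    have s1: "psi k (v (Suc k)) \<ge> psi k (v k) + 1/2 * t\<^sup>2" using strong[OF k(2)] unfolding t_def w_def by simp
    have s2: "a (Suc k) * (gradf (y k) \<bullet> (v k - y k)) \<ge> 0" using kk gyv[OF k(2)] by simp
    have s3: "a (Suc k) * (gradf (y k) \<bullet> w) \<ge> a (Suc k) * (- (G k * t))"
      using mult_left_mono[OF gw, of "a (Suc k)"] kk by simp
    have s4: "A k * f (y k) \<le> A k * f (x k)" using fyx[OF k(2)] Ak by (simp add: mult_left_mono)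
    have "A (Suc k) * f (x (Suc k)) \<le> (A k + a (Suc k)) * f (y k) - (a (Suc k))\<^sup>2 * (G k)\<^sup>2 / 2"
      using kk AS by simp
    also have "\<dots> \<le> psi (Suc k) (v (Suc k))"
      using e s1 s2 s3 s4 IH quad by (simp add: algebra_simps)
    finally show ?case .
  qed
  have upper: "k \<le> N \<Longrightarrow> psi k xs \<le> V + A k * f xs" for k
  proof (induction k)
    case 0 then show ?case using R0 by (simp add: psi_def agm_psi_def V_def)
  next
    case (Suc k)
    hence k: "k < N" "k \<le> N" by auto
    have Ak: "A k \<ge> 0" using Agrow k by auto
    have a0: "0 < a (Suc k)" using key[OF k(1) Ak] by auto
    have AS: "A (Suc k) = A k + a (Suc k)" using RA k by auto
    have "f (y k) + gradf (y k) \<bullet> (xs - y k) \<le> f xs"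
      using wq2[of "y k"] by (simp add: inner_diff_right)
    hence "a (Suc k) * (f (y k) + gradf (y k) \<bullet> (xs - y k)) \<le> a (Suc k) * f xs"
      using a0 by (simp add: mult_left_mono)
    moreover have "psi (Suc k) xs = psi k xs + a (Suc k) * (f (y k) + gradf (y k) \<bullet> (xs - y k))"
      unfolding psi_def by (rule psi_Suc)
    ultimately show ?case using Suc k AS by (simp add: algebra_simps)
  qed
  have gap: "1 \<le> k \<Longrightarrow> k \<le> N \<Longrightarrow> f (x k) - f xs \<le> V / A k" for k
  proof -
    assume k: "1 \<le> k" "k \<le> N"
    have "A k * f (x k) \<le> V + A k * f xs" using inv[OF k(2)] vmin[OF k(2), of xs] upper[OF k(2)] by linarith
    hence "A k * (f (x k) - f xs) \<le> V" by (simp add: algebra_simps)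
    thus ?thesis using Apos[OF k] by (simp add: field_simps)
  qed
  have gapA: "1 \<le> k \<Longrightarrow> k \<le> N \<Longrightarrow> f (x k) - f xs \<le> 4 * L * V / (real k)\<^sup>2" for k
  proof -
    assume k: "1 \<le> k" "k \<le> N"
    have A1: "L * A k \<ge> (real k)\<^sup>2 / 4" using Agrow k by auto
    have kp: "(real k)\<^sup>2 > 0" using k by simp
    have "V / A k \<le> 4 * L * V / (real k)\<^sup>2"
    proof -
      have "V * (real k)\<^sup>2 \<le> V * (4 * L * A k)" using A1 V0 by (rule_tac mult_left_mono) auto
      thus ?thesis using Apos[OF k] kp by (simp add: field_simps)
    qed
    thus ?thesis using gap[OF k] by linarith
  qed
  have GN: "(G N)\<^sup>2 \<le> 2 * L * (f (y N) - f xs)"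
  proof -
    have "f (y N + (y N - (G N / L) *\<^sub>R sharp (gradf (y N)) - y N))
       \<le> f (y N) + gradf (y N) \<bullet> (y N - (G N / L) *\<^sub>R sharp (gradf (y N)) - y N)
          + L / 2 * (nrm (y N - (G N / L) *\<^sub>R sharp (gradf (y N)) - y N))\<^sup>2"
      by (rule descent[OF Nn S])
    also have "\<dots> \<le> f (y N) - (G N)\<^sup>2 / (2 * L)" unfolding G_def by (rule model_step[OF Nn Lp sh])
    finally have "f xs \<le> f (y N) - (G N)\<^sup>2 / (2 * L)" using wq1 by (meson order_trans)
    thus ?thesis using Lp by (simp add: field_simps)
  qed
  have tele: "j \<le> N \<Longrightarrow> (\<Sum>k\<in>{j..N}. (G k)\<^sup>2) \<le> 2 * L * (f (y j) - f xs)" for j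
  proof (induction j rule: inc_induct)
    case base then show ?case using GN by simp
  next
    case (step n)
    have Ak: "A n \<ge> 0" using Agrow step by auto
    have d1: "f (x (Suc n)) \<le> f (y n) - (G n)\<^sup>2 / (2 * L)" using key[OF step(2) Ak] by auto
    have d2: "f (y (Suc n)) \<le> f (x (Suc n))" using fyx step by auto
    have "{n..N} = insert n {Suc n..N}" using step by auto
    hence "(\<Sum>k\<in>{n..N}. (G k)\<^sup>2) = (G n)\<^sup>2 + (\<Sum>k\<in>{Suc n..N}. (G k)\<^sup>2)" by simp
    also have "\<dots> \<le> (G n)\<^sup>2 + 2 * L * (f (y (Suc n)) - f xs)" using step(3) by simp
    also have "\<dots> \<le> 2 * L * (f (y n) - f xs)"
    proof -
      have "(G n)\<^sup>2 \<le> 2 * L * (f (y n) - f (x (Suc n)))" using d1 Lp by (simp add: field_simps)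
      moreover have "2 * L * (f (y (Suc n)) - f xs) \<le> 2 * L * (f (x (Suc n)) - f xs)"
        using d2 Lp by simp
      ultimately show ?thesis by (simp add: algebra_simps)
    qed
    finally show ?case .
  qed
  define m where "m = nat \<lceil>real N / 2\<rceil>"
  have m1: "real N \<le> 2 * real m" unfolding m_def by linarith
  have m2: "2 * real m \<le> real N + 1"
  proof -
    have "\<lceil>real N / 2\<rceil> < real N / 2 + 1" by linarith
    hence "2 * \<lceil>real N / 2\<rceil> < int N + 2" by linarith
    hence "2 * \<lceil>real N / 2\<rceil> \<le> int N + 1" by linarith
    thus ?thesis unfolding m_def by linarith
  qed
  have mN: "1 \<le> m" "m \<le> N" using m1 m2 N1 by linarith+
  have fin: "finite {m..N}" "{m..N} \<noteq> {}" using mN by auto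
  have card: "card {m..N} = N + 1 - m" by simp
  have cpos: "real (card {m..N}) = real N + 1 - real m" using card mN by simp
  have "Min ((\<lambda>k. (G k)\<^sup>2) ` {m..N}) * real (card {m..N}) \<le> (\<Sum>k\<in>{m..N}. (G k)\<^sup>2)"
    by (rule min_avg[OF fin])
  also have "\<dots> \<le> 2 * L * (f (y m) - f xs)" by (rule tele[OF mN(2)])
  also have "\<dots> \<le> 2 * L * (f (x m) - f xs)" using fyx[OF mN(2)] Lp by simp
  also have "\<dots> \<le> 2 * L * (4 * L * V / (real m)\<^sup>2)" by (rule mult_left_mono[OF gapA[OF mN]]) (use Lp in simp)
  finally have mm: "Min ((\<lambda>k. (G k)\<^sup>2) ` {m..N}) * (real N + 1 - real m) \<le> 8 * L\<^sup>2 * V / (real m)\<^sup>2"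
    using cpos by (simp add: power2_eq_square algebra_simps)
  have part1: "Min ((\<lambda>k. (G k)\<^sup>2) ` {m..N}) \<le> 64 * L\<^sup>2 * V / (real N) ^ 3"
  proof -
    define M where "M = Min ((\<lambda>k. (G k)\<^sup>2) ` {m..N})"
    have c0: "real N + 1 - real m > 0" using mN by simp
    have mp: "(real m)\<^sup>2 > 0" using mN by simp
    have Np: "real N > 0" using N1 by simp
    have "M * (real N + 1 - real m) \<le> 8 * L\<^sup>2 * V / (real m)\<^sup>2" using mm unfolding M_def .
    hence "M \<le> (8 * L\<^sup>2 * V / (real m)\<^sup>2) / (real N + 1 - real m)" using pos_le_divide_eq[OF c0] by blast
    hence "M \<le> 8 * L\<^sup>2 * V / ((real m)\<^sup>2 * (real N + 1 - real m))" by (simp only: divide_divide_eq_left)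
    also have "\<dots> \<le> 8 * L\<^sup>2 * V / ((real N)^3 / 8)"
    proof (rule divide_left_mono)
      have a: "(real N)\<^sup>2 \<le> 4 * (real m)\<^sup>2"
      proof -
        have "(real N)\<^sup>2 \<le> (2 * real m)\<^sup>2" using m1 by (intro power_mono) auto
        thus ?thesis by (simp add: power2_eq_square)
      qed
      have b: "real N \<le> 2 * (real N + 1 - real m)" using m2 by simp
      have "(real N)^3 = (real N)\<^sup>2 * real N" by (simp add: power2_eq_square power3_eq_cube)
      also have "\<dots> \<le> (4 * (real m)\<^sup>2) * (2 * (real N + 1 - real m))"
        using a b Np by (intro mult_mono) auto
      also have "(4 * (real m)\<^sup>2) * (2 * (real N + 1 - real m)) = 8 * ((real m)\<^sup>2 * (real N + 1 - real m))" by simp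
      finally show "(real N)^3 / 8 \<le> (real m)\<^sup>2 * (real N + 1 - real m)" by simp
      show "0 \<le> 8 * L\<^sup>2 * V" using V0 by simp
      show "0 < (real m)\<^sup>2 * (real N + 1 - real m) * ((real N)^3 / 8)" using mp c0 Np by simp
    qed
    also have "\<dots> = 64 * L\<^sup>2 * V / (real N) ^ 3" by (simp add: field_simps)
    finally show ?thesis unfolding M_def .
  qed
  have part2: "f (x N) - f xs \<le> 4 * L * V / (real N)\<^sup>2" using gapA[OF N1 order_refl] .
  show ?thesis using part1 part2 unfolding G_def V_def m_def by simp
qed

end
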